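(* Let $(\mathcal G_A,p^A)$ and $(\mathcal G_B,p^B)$ be CPS's on the finite set $\Omega$ (satisfying the standing assumptions), each satisfying certainty reflection and being $1$-closed. Fix an event $E$ and $q_A,q_B\in[0,1]$. Then for all $n\ge0$, $A^n$ is $A$-saturated and $B^n$ is $B$-saturated; moreover $C^\infty$ is both $A$-saturated and $B$-saturated.
   Context: $\Omega$ is a finite set; every subset is an event. A CPS is a pair $(\mathcal G,p)$ where $\mathcal G$ is a family of nonempty subsets of $\Omega$ and $p$ assigns to each $G\in\mathcal G$ a probability measure $p_G$ on $\Omega$ with $p_G(G)=1$ and $p_G(E)=p_G(F)p_F(E)$ whenever $E\subseteq F\subseteq G$, $F,G\in\mathcal G$. Standing assumption: each conditioning family is closed under unions and nonempty intersections and covers $\Omega$. Atom: $m_i(\omega)=\bigcap\{G\in\mathcal G_i:\omega\in G\}$. $(\mathcal G_i,p^i)$ is $1$-closed if every $L\subseteq G$ with $G\in\mathcal G_i$ and $p^i_G(L)=1$ belongs to $\mathcal G_i$. Certainty reflection: for every event $E$, $q\in[0,1]$, $\omega$: $p^i_{m_i(\omega)}(E)=q$ implies $p^i_{m_i(\omega)}(\{\omega':p^i_{m_i(\omega')}(E)=q\})=1$. An event $F$ is $i$-saturated if $\omega\in F$ implies $m_i(\omega)\subseteq F$. $C_i(F)=\{\omega:p^i_{m_i(\omega)}(F)=1\}$. $A^0=\{\omega:p^A_{m_A(\omega)}(E)=q_A\}$, $B^0=\{\omega:p^B_{m_B(\omega)}(E)=q_B\}$, $A^{n+1}=A^n\cap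 C_A(B^n)$, $B^{n+1}=B^n\cap C_B(A^n)$, $C^\infty=\bigcap_{n\ge0}A^n\cap\bigcap_{n\ge0}B^n$. *)

theory Defs
  imports "HOL-Probability.Probability_Mass_Function"
begin

text \<open>Omega is the universe of a finite type 'w; every subset is an event.
  A CPS is a family Gs of conditioning events together with a map p assigning
  to each conditioning event a probability measure (a pmf) on Omega.
  Only the values of p on members of Gs are meaningful.\<close>

definition cprob :: "('w set \<Rightarrow> 'w pmf) \<Rightarrow> 'w set \<Rightarrow> 'w set \<Rightarrow> real" where
  "cprob p G E = measure_pmf.prob (p G) E"

definition is_cps :: "'w set set \<Rightarrow> ('w set \<Rightarrow> 'w pmf) \<Rightarrow> bool" where
  "is_cps Gs p \<longleftrightarrow>
     (\<forall>G\<in>Gs. G \<noteq> {}) \<and>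
     (\<forall>G\<in>Gs. cprob p G G = 1) \<and>
     (\<forall>E F G. E \<subseteq> F \<longrightarrow> F \<subseteq> G \<longrightarrow> F \<in> Gs \<longrightarrow> G \<in> Gs \<longrightarrow>
        cprob p G E = cprob p G F * cprob p F E)"

definition standing :: "'w set set \<Rightarrow> bool" where
  "standing Gs \<longleftrightarrow>
     (\<forall>F\<in>Gs. \<forall>G\<in>Gs. F \<union> G \<in> Gs) \<and>
     (\<forall>F\<in>Gs. \<forall>G\<in>Gs. F \<inter> G \<noteq> {} \<longrightarrow> F \<inter> G \<in> Gs) \<and>
     \<Union>Gs = UNIV"

definition atom :: "'w set set \<Rightarrow> 'w \<Rightarrow> 'w set" where
  "atom Gs \<omega> = \<Inter>{G\<in>Gs. \<omega> \<in> G}"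

definition one_closed :: "'w set set \<Rightarrow> ('w set \<Rightarrow> 'w pmf) \<Rightarrow> bool" where
  "one_closed Gs p \<longleftrightarrow> (\<forall>G\<in>Gs. \<forall>L. L \<subseteq> G \<longrightarrow> cprob p G L = 1 \<longrightarrow> L \<in> Gs)"

definition certainty_reflection :: "'w set set \<Rightarrow> ('w set \<Rightarrow> 'w pmf) \<Rightarrow> bool" where
  "certainty_reflection Gs p \<longleftrightarrow>
     (\<forall>E q \<omega>. cprob p (atom Gs \<omega>) E = q \<longrightarrow>
        cprob p (atom Gs \<omega>) {\<omega>'. cprob p (atom Gs \<omega>') E = q} = 1)"

definition saturated :: "'w set set \<Rightarrow> 'w set \<Rightarrow> bool" where
  "saturated Gs F \<longleftrightarrow> (\<forall>\<omega>\<in>F. atom Gs \<omega> \<subseteq> F)"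

definition certain :: "'w set set \<Rightarrow> ('w set \<Rightarrow> 'w pmf) \<Rightarrow> 'w set \<Rightarrow> 'w set" where
  "certain Gs p F = {\<omega>. cprob p (atom Gs \<omega>) F = 1}"

primrec AB :: "'w set set \<Rightarrow> ('w set \<Rightarrow> 'w pmf) \<Rightarrow> 'w set set \<Rightarrow> ('w set \<Rightarrow> 'w pmf)
               \<Rightarrow> 'w set \<Rightarrow> real \<Rightarrow> real \<Rightarrow> nat \<Rightarrow> 'w set \<times> 'w set" where
  "AB GA pA GB pB E qA qB 0 =
     ({\<omega>. cprob pA (atom GA \<omega>) E = qA}, {\<omega>. cprob pB (atom GB \<omega>) E = qB})"
| "AB GA pA GB pB E qA qB (Suc n) =
     (let (An, Bn) = AB GA pA GB pB E qA qB n
      in (An \<inter> certain GA pA Bn, Bn \<inter> certain GB pB An))"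

definition A_iter where "A_iter GA pA GB pB E qA qB n = fst (AB GA pA GB pB E qA qB n)"
definition B_iter where "B_iter GA pA GB pB E qA qB n = snd (AB GA pA GB pB E qA qB n)"

definition Cinf where
  "Cinf GA pA GB pB E qA qB =
     (\<Inter>n. A_iter GA pA GB pB E qA qB n) \<inter> (\<Inter>n. B_iter GA pA GB pB E qA qB n)"

end

theory Submission
  imports Defs
begin

lemma prob_int_one:
  assumes "cprob p G A = 1" "cprob p G B = 1"
  shows "cprob p G (A \<inter> B) = 1"
proof -
  have a: "AE x in measure_pmf (p G). x \<in> A"
    using assms(1) measure_pmf.prob_eq_1[of A "p G"] unfolding cprob_def by simp
  have b: "AE x in measure_pmf (p G). x \<in> B"
    using assms(2) measure_pmf.prob_eq_1[of B "p G"] unfolding cprob_def by simp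
  have "AE x in measure_pmf (p G). x \<in> A \<inter> B"
    using AE_conjI[OF a b] by simp
  then show ?thesis using measure_pmf.prob_eq_1[of "A \<inter> B" "p G"] unfolding cprob_def by simp
qed

lemma inter_in:
  assumes "standing Gs" "finite S" "S \<noteq> {}" "S \<subseteq> Gs" "\<forall>G\<in>S. w \<in> G"
  shows "\<Inter>S \<in> Gs"
  using assms(2,3,4,5)
proof (induction S rule: finite_ne_induct)
  case (singleton x) then show ?case by simp
next
  case (insert x F)
  have H: "\<forall>F\<in>Gs. \<forall>G\<in>Gs. F \<inter> G \<noteq> {} \<longrightarrow> F \<inter> G \<in> Gs"
    using assms(1) by (simp add: standing_def)
  have x: "x \<in> Gs" and wx: "w \<in> x" using insert.prems by simp_all
  have IF: "\<Inter>F \<in> Gs" using insert.IH insert.prems by simp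
  have wF: "w \<in> \<Inter>F" using insert.prems by simp
  have "x \<inter> \<Inter>F \<in> Gs"
    using H x IF wx wF by blast
  then show ?case by simp
qed

lemma atom_in:
  fixes Gs :: "('w::finite) set set"
  assumes "standing Gs"
  shows "atom Gs w \<in> Gs"
proof -
  have "\<Union>Gs = UNIV" using assms by (simp add: standing_def)
  then have "w \<in> \<Union>Gs" by simp
  then obtain G where "G \<in> Gs" "w \<in> G" by (rule UnionE)
  then have ne: "{G\<in>Gs. w \<in> G} \<noteq> {}" by blast
  have fin: "finite {G\<in>Gs. w \<in> G}" by (rule finite)
  have sub: "{G\<in>Gs. w \<in> G} \<subseteq> Gs" by blast
  have all: "\<forall>G\<in>{G\<in>Gs. w \<in> G}. w \<in> G" by blast
  show ?thesis unfolding atom_def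
    by (rule inter_in[OF assms fin ne sub all])
qed

lemma key:
  fixes Gs :: "('w::finite) set set"
  assumes "is_cps Gs p" "standing Gs" "one_closed Gs p"
    and "w \<in> F" "cprob p (atom Gs w) F = 1"
  shows "atom Gs w \<subseteq> F"
proof -
  have m: "atom Gs w \<in> Gs" by (rule atom_in[OF assms(2)])
  then have "cprob p (atom Gs w) (atom Gs w) = 1" using assms(1) unfolding is_cps_def by blast
  then have "cprob p (atom Gs w) (F \<inter> atom Gs w) = 1" using assms(5) prob_int_one by blast
  then have L: "F \<inter> atom Gs w \<in> Gs" using assms(3) m unfolding one_closed_def by blast
  then have "atom Gs w \<subseteq> F \<inter> atom Gs w" using assms(4) unfolding atom_def
    by (intro Inter_lower) (auto simp: atom_def)
  then show ?thesis by blast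
qed

lemma certain_sat:
  fixes Gs :: "('w::finite) set set"
  assumes "is_cps Gs p" "standing Gs" "one_closed Gs p" "certainty_reflection Gs p"
  shows "saturated Gs (certain Gs p F)"
  unfolding saturated_def
proof
  fix w assume "w \<in> certain Gs p F"
  then have "cprob p (atom Gs w) F = 1" by (simp add: certain_def)
  then have "cprob p (atom Gs w) {w'. cprob p (atom Gs w') F = 1} = 1"
    using assms(4)[unfolded certainty_reflection_def, rule_format, where E=F and q=1 and \<omega>=w] by simp
  then have "cprob p (atom Gs w) (certain Gs p F) = 1" by (simp add: certain_def)
  then show "atom Gs w \<subseteq> certain Gs p F"
    by (rule key[OF assms(1-3) \<open>w \<in> certain Gs p F\<close>])
qed

lemma level_sat:
  fixes Gs :: "('w::finite) set set"
  assumes "is_cps Gs p" "standing Gs" "one_closed Gs p" "certainty_reflection Gs p"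
  shows "saturated Gs {w. cprob p (atom Gs w) E = q}"
  unfolding saturated_def
proof
  fix w assume w: "w \<in> {w. cprob p (atom Gs w) E = q}"
  then have "cprob p (atom Gs w) {w. cprob p (atom Gs w) E = q} = 1"
    using assms(4)[unfolded certainty_reflection_def, rule_format, where E=E and q=q and \<omega>=w] by simp
  then show "atom Gs w \<subseteq> {w. cprob p (atom Gs w) E = q}"
    by (rule key[OF assms(1-3) w])
qed

lemma sat_int: "saturated Gs A \<Longrightarrow> saturated Gs B \<Longrightarrow> saturated Gs (A \<inter> B)"
  unfolding saturated_def by blast

lemma A_Suc: "A_iter GA pA GB pB E qA qB (Suc n) =
   A_iter GA pA GB pB E qA qB n \<inter> certain GA pA (B_iter GA pA GB pB E qA qB n)"
  by (simp add: A_iter_def B_iter_def split: prod.splits)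

lemma B_Suc: "B_iter GA pA GB pB E qA qB (Suc n) =
   B_iter GA pA GB pB E qA qB n \<inter> certain GB pB (A_iter GA pA GB pB E qA qB n)"
  by (simp add: A_iter_def B_iter_def split: prod.splits)

theorem lemma3:
  fixes GA GB :: "('w::finite) set set"
    and pA pB :: "'w set \<Rightarrow> 'w pmf"
    and E :: "'w set" and qA qB :: real
  assumes "is_cps GA pA" and "standing GA"
    and "is_cps GB pB" and "standing GB"
    and "certainty_reflection GA pA" and "one_closed GA pA"
    and "certainty_reflection GB pB" and "one_closed GB pB"
    and "0 \<le> qA" and "qA \<le> 1" and "0 \<le> qB" and "qB \<le> 1"
  shows "(\<forall>n. saturated GA (A_iter GA pA GB pB E qA qB n)
             \<and> saturated GB (B_iter GA pA GB pB E qA qB n))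
         \<and> saturated GA (Cinf GA pA GB pB E qA qB)
         \<and> saturated GB (Cinf GA pA GB pB E qA qB)"
proof -
  let ?A = "A_iter GA pA GB pB E qA qB" and ?B = "B_iter GA pA GB pB E qA qB"
  have S: "saturated GA (?A n) \<and> saturated GB (?B n)" for n
  proof (induction n)
    case 0
    then show ?case
      using level_sat[OF assms(1,2,6,5)] level_sat[OF assms(3,4,8,7)]
      by (simp add: A_iter_def B_iter_def)
  next
    case (Suc n)
    then show ?case unfolding A_Suc B_Suc
      by (intro conjI sat_int certain_sat[OF assms(1,2,6,5)] certain_sat[OF assms(3,4,8,7)]) auto
  qed
  have CA: "saturated GA (Cinf GA pA GB pB E qA qB)"
    unfolding saturated_def
  proof
    fix w assume w: "w \<in> Cinf GA pA GB pB E qA qB"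
    have wX: "w \<in> ?A n" for n using w unfolding Cinf_def by simp
    have wY: "w \<in> ?B n" for n using w unfolding Cinf_def by simp
    have 1: "atom GA w \<subseteq> ?A n" for n
      using S[of n] wX[of n] unfolding saturated_def by simp
    have 2: "atom GA w \<subseteq> ?B n" for n
    proof -
      have "cprob pA (atom GA w) (?B n) = 1" using wX[of "Suc n"] unfolding A_Suc certain_def by simp
      then show ?thesis by (rule key[OF assms(1,2,6) wY[of n]])
    qed
    show "atom GA w \<subseteq> Cinf GA pA GB pB E qA qB" unfolding Cinf_def
      by (intro Int_greatest INT_greatest 1 2)
  qed
  have CB: "saturated GB (Cinf GA pA GB pB E qA qB)"
    unfolding saturated_def
  proof
    fix w assume w: "w \<in> Cinf GA pA GB pB E qA qB"
    have wX: "w \<in> ?B n" for n using w unfolding Cinf_def by simp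
    have wY: "w \<in> ?A n" for n using w unfolding Cinf_def by simp
    have 1: "atom GB w \<subseteq> ?B n" for n
      using S[of n] wX[of n] unfolding saturated_def by simp
    have 2: "atom GB w \<subseteq> ?A n" for n
    proof -
      have "cprob pB (atom GB w) (?A n) = 1" using wX[of "Suc n"] unfolding B_Suc certain_def by simp
      then show ?thesis by (rule key[OF assms(3,4,8) wY[of n]])
    qed
    show "atom GB w \<subseteq> Cinf GA pA GB pB E qA qB" unfolding Cinf_def
      by (intro Int_greatest INT_greatest 1 2)
  qed
  show ?thesis using S CA CB by simp
qed

end
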